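(* For every finite graph $G$, $\mathrm{copw}_1(G)=\deg(G)+1$.
   Context: Graphs are finite, simple, undirected. The degeneracy $\deg(G)$ is the least $d$ such that there is a total order of $V(G)$ in which every vertex has at most $d$ neighbours preceding it. For $r\in\mathbb N\cup\{\infty\}$ and $k\ge 1$, the Cops and Robber game of radius $r$ and width $k$ on $G$ is played as follows. Let $S_0=\emptyset$; the robber chooses an initial vertex $v_0$. In round $i\ge1$ the cops announce a set $S_i\subseteq V(G)$ with $|S_i|\le k$ (their new positions); knowing $S_i$, the robber moves from $v_{i-1}$ to a vertex $v_i$ along a path of length at most $r$ (any length if $r=\infty$; length $0$ allowed) that contains no vertex of $S_{i-1}\cap S_i$ (the cops that remain on the ground). The cops win if $v_i\in S_i$ for some $i$; the robber wins if this never happens. The radius-$r$ cop-width $\mathrm{copw}_r(G)$ is the least $k$ such that the cops have a winning strategy in this game of radius $r$ and width $k$. *)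

theory Defs
  imports Main "HOL-Library.Extended_Nat"
begin

definition simple_graph :: "'a set \<Rightarrow> ('a \<Rightarrow> 'a \<Rightarrow> bool) \<Rightarrow> bool" where
  "simple_graph V E \<longleftrightarrow>
     (\<forall>u v. E u v \<longrightarrow> u \<in> V \<and> v \<in> V) \<and> (\<forall>u v. E u v \<longrightarrow> E v u) \<and> (\<forall>v. \<not> E v v)"

definition degen_order :: "'a set \<Rightarrow> ('a \<Rightarrow> 'a \<Rightarrow> bool) \<Rightarrow> 'a list \<Rightarrow> nat \<Rightarrow> bool" where
  "degen_order V E xs d \<longleftrightarrow> distinct xs \<and> set xs = V \<and>
     (\<forall>i < length xs. card {j. j < i \<and> E (xs ! j) (xs ! i)} \<le> d)"

definition degeneracy :: "'a set \<Rightarrow> ('a \<Rightarrow> 'a \<Rightarrow> bool) \<Rightarrow> nat" where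
  "degeneracy V E = (LEAST d. \<exists>xs. degen_order V E xs d)"

text \<open>A walk p (list of vertices) from u to w in the graph, avoiding the set X.
  Its length is length p - 1 (number of edges).\<close>
definition walk_avoiding :: "'a set \<Rightarrow> ('a \<Rightarrow> 'a \<Rightarrow> bool) \<Rightarrow> 'a set \<Rightarrow> 'a list \<Rightarrow> 'a \<Rightarrow> 'a \<Rightarrow> bool" where
  "walk_avoiding V E X p u w \<longleftrightarrow> p \<noteq> [] \<and> hd p = u \<and> last p = w \<and> set p \<subseteq> V \<and>
     set p \<inter> X = {} \<and> (\<forall>i. Suc i < length p \<longrightarrow> E (p ! i) (p ! Suc i))"

text \<open>A cop strategy maps the robber's history [v_0,...,v_{i-1}] to the new cop set S_i.\<close>
definition cop_strategy :: "'a set \<Rightarrow> nat \<Rightarrow> ('a list \<Rightarrow> 'a set) \<Rightarrow> bool" where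
  "cop_strategy V k \<sigma> \<longleftrightarrow> (\<forall>h. \<sigma> h \<subseteq> V \<and> card (\<sigma> h) \<le> k)"

definition cop_pos :: "('a list \<Rightarrow> 'a set) \<Rightarrow> (nat \<Rightarrow> 'a) \<Rightarrow> nat \<Rightarrow> 'a set" where
  "cop_pos \<sigma> v i = (if i = 0 then {} else \<sigma> (map v [0..<i]))"

definition robber_play :: "'a set \<Rightarrow> ('a \<Rightarrow> 'a \<Rightarrow> bool) \<Rightarrow> enat \<Rightarrow> ('a list \<Rightarrow> 'a set) \<Rightarrow> (nat \<Rightarrow> 'a) \<Rightarrow> bool" where
  "robber_play V E r \<sigma> v \<longleftrightarrow> v 0 \<in> V \<and>
     (\<forall>i \<ge> 1. \<exists>p. walk_avoiding V E (cop_pos \<sigma> v (i - 1) \<inter> cop_pos \<sigma> v i) p (v (i - 1)) (v i)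
                  \<and> enat (length p - 1) \<le> r)"

definition cops_win :: "'a set \<Rightarrow> ('a \<Rightarrow> 'a \<Rightarrow> bool) \<Rightarrow> enat \<Rightarrow> nat \<Rightarrow> bool" where
  "cops_win V E r k \<longleftrightarrow> (\<exists>\<sigma>. cop_strategy V k \<sigma> \<and>
     (\<forall>v. robber_play V E r \<sigma> v \<longrightarrow> (\<exists>i \<ge> 1. v i \<in> cop_pos \<sigma> v i)))"

definition copw :: "'a set \<Rightarrow> ('a \<Rightarrow> 'a \<Rightarrow> bool) \<Rightarrow> enat \<Rightarrow> nat" where
  "copw V E r = (LEAST k. k \<ge> 1 \<and> cops_win V E r k)"

end

theory Submission
  imports Defs
begin

lemma order_exists:
  assumes sym: "\<forall>u v. E u v \<longrightarrow> E v u"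
  shows "finite U \<Longrightarrow> (\<forall>W\<subseteq>U. W\<noteq>{} \<longrightarrow> (\<exists>u\<in>W. card {w\<in>W. E u w} \<le> c))
         \<Longrightarrow> \<exists>xs. degen_order U E xs c"
proof (induction "card U" arbitrary: U rule: less_induct)
  case less
  show ?case
  proof (cases "U = {}")
    case True
    then show ?thesis by (auto simp: degen_order_def intro: exI[of _ "[]"])
  next
    case False
    then obtain u where u: "u \<in> U" "card {w\<in>U. E u w} \<le> c" using less.prems by blast
    have "card (U - {u}) < card U" using card_Diff1_less[OF less.prems(1) u(1)] .
    moreover have "\<forall>W\<subseteq>U - {u}. W\<noteq>{} \<longrightarrow> (\<exists>u\<in>W. card {w\<in>W. E u w} \<le> c)"
      using less.prems by blast
    ultimately obtain xs where xs: "degen_order (U - {u}) E xs c"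
      using less.hyps[of "U-{u}"] less.prems by auto
    let ?ys = "xs @ [u]"
    have d: "distinct ?ys" "set ?ys = U" using xs u unfolding degen_order_def by auto
    have "\<forall>i<length ?ys. card {j. j < i \<and> E (?ys!j) (?ys!i)} \<le> c"
    proof (intro allI impI)
      fix i assume i: "i < length ?ys"
      show "card {j. j < i \<and> E (?ys!j) (?ys!i)} \<le> c"
      proof (cases "i < length xs")
        case True
        then have "{j. j < i \<and> E (?ys!j) (?ys!i)} = {j. j < i \<and> E (xs!j) (xs!i)}"
          by (auto simp: nth_append)
        then show ?thesis using xs True unfolding degen_order_def by auto
      next
        case False
        then have ii: "i = length xs" using i by simp
        have eq: "{j. j < i \<and> E (?ys!j) (?ys!i)} = {j. j < length xs \<and> E (xs!j) u}"
          using ii by (auto simp: nth_append)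
        have inj: "inj_on (nth xs) {j. j < length xs \<and> E (xs!j) u}"
          using xs unfolding degen_order_def by (auto simp: inj_on_def nth_eq_iff_index_eq)
        have sub: "nth xs ` {j. j < length xs \<and> E (xs!j) u} \<subseteq> {w\<in>U. E u w}"
          using xs sym unfolding degen_order_def by auto
        have "card {j. j < length xs \<and> E (xs!j) u} = card (nth xs ` {j. j < length xs \<and> E (xs!j) u})"
          using card_image[OF inj] by simp
        also have "\<dots> \<le> card {w\<in>U. E u w}" using sub less.prems(1) by (intro card_mono) auto
        finally show ?thesis using eq u by simp
      qed
    qed
    then show ?thesis using d unfolding degen_order_def by blast
  qed
qed

lemma core_exists:
  assumes sg: "simple_graph V E" and fin: "finite V" and d1: "1 \<le> degeneracy V E"
  shows "\<exists>H\<subseteq>V. H \<noteq> {} \<and> (\<forall>u\<in>H. degeneracy V E \<le> card {w\<in>H. E u w})"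
proof (rule ccontr)
  assume neg: "\<not> ?thesis"
  have "\<forall>W\<subseteq>V. W\<noteq>{} \<longrightarrow> (\<exists>u\<in>W. card {w\<in>W. E u w} \<le> degeneracy V E - 1)"
  proof (intro allI impI)
    fix W assume W: "W \<subseteq> V" "W \<noteq> {}"
    then obtain u where "u \<in> W" "\<not> degeneracy V E \<le> card {w\<in>W. E u w}"
      using neg by blast
    then show "\<exists>u\<in>W. card {w\<in>W. E u w} \<le> degeneracy V E - 1" by (intro bexI[of _ u]) auto
  qed
  moreover have sym: "\<forall>u v. E u v \<longrightarrow> E v u" using sg unfolding simple_graph_def by blast
  ultimately obtain xs where xs: "degen_order V E xs (degeneracy V E - 1)"
    using order_exists[OF sym fin] by blast
  have ex: "\<exists>xs. degen_order V E xs (degeneracy V E - 1)" using xs by blast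
  have "degeneracy V E \<le> degeneracy V E - 1"
    using Least_le[of "\<lambda>d. \<exists>xs. degen_order V E xs d", OF ex]
    by (simp only: degeneracy_def)
  then show False using d1 by linarith
qed

lemma degen_exists:
  assumes "finite V"
  shows "\<exists>xs. degen_order V E xs (degeneracy V E)"
proof -
  obtain xs where xs: "set xs = V" "distinct xs" using finite_distinct_list assms by blast
  have "degen_order V E xs (length xs)"
    unfolding degen_order_def
  proof (intro conjI xs allI impI)
    fix i assume i: "i < length xs"
    have "card {j. j < i \<and> E (xs ! j) (xs ! i)} \<le> card {..<i}" by (intro card_mono) auto
    then show "card {j. j < i \<and> E (xs ! j) (xs ! i)} \<le> length xs" using i by simp
  qed
  then show ?thesis unfolding degeneracy_def by (rule LeastI_ex[OF exI, OF exI])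
qed

lemma cops_upper:
  assumes sg: "simple_graph V E" and fin: "finite V"
  shows "cops_win V E 1 (degeneracy V E + 1)"
proof -
  obtain xs where xs: "degen_order V E xs (degeneracy V E)" using degen_exists fin by blast
  let ?d = "degeneracy V E"
  define idx where "idx w = (SOME i. i < length xs \<and> xs!i = w)" for w
  have idx: "idx w < length xs \<and> xs ! idx w = w" if "w \<in> V" for w
  proof -
    have "\<exists>i. i < length xs \<and> xs!i = w" using xs that unfolding degen_order_def
      by (metis in_set_conv_nth)
    then show ?thesis unfolding idx_def by (rule someI_ex)
  qed
  define \<sigma> where "\<sigma> h = (if h \<noteq> [] \<and> last h \<in> V then (nth xs) ` insert (idx (last h))
     {j. j < idx (last h) \<and> E (xs!j) (xs!idx (last h))} else {})" for h
  have strat: "cop_strategy V (?d+1) \<sigma>"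
    unfolding cop_strategy_def
  proof
    fix h
    show "\<sigma> h \<subseteq> V \<and> card (\<sigma> h) \<le> ?d + 1"
    proof (cases "h \<noteq> [] \<and> last h \<in> V")
      case True
      let ?i = "idx (last h)"
      have il: "?i < length xs" using idx True by blast
      let ?J = "insert ?i {j. j < ?i \<and> E (xs!j) (xs!?i)}"
      have eq: "\<sigma> h = nth xs ` ?J" using True unfolding \<sigma>_def by simp
      have J: "?J \<subseteq> {..<length xs}" using il by auto
      have "nth xs ` {..<length xs} \<subseteq> V" using xs unfolding degen_order_def by auto
      then have sub: "\<sigma> h \<subseteq> V" using J eq by blast
      have fin2: "finite {j. j < ?i \<and> E (xs!j) (xs!?i)}" by (rule finite_subset[of _ "{..<?i}"]) auto
      have cd: "card {j. j < ?i \<and> E (xs!j) (xs!?i)} \<le> ?d" using xs il unfolding degen_order_def by blast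
      have fin3: "finite ?J" using fin2 by simp
      have "card (\<sigma> h) \<le> card ?J" unfolding eq by (rule card_image_le[OF fin3])
      also have "\<dots> \<le> card {j. j < ?i \<and> E (xs!j) (xs!?i)} + 1" using fin2 by (simp add: card_insert_if)
      also have "\<dots> \<le> ?d + 1" using cd by simp
      finally show ?thesis using sub by simp
    next
      case False
      have "\<sigma> h = {}" unfolding \<sigma>_def by (rule if_not_P[OF False])
      then show ?thesis by simp
    qed
  qed
  have win: "\<exists>i\<ge>1. v i \<in> cop_pos \<sigma> v i" if rp: "robber_play V E 1 \<sigma> v" for v
  proof (rule ccontr)
    assume nc: "\<not> ?thesis"
    have symE: "\<forall>u v. E u v \<longrightarrow> E v u" using sg unfolding simple_graph_def by blast
    have step: "v (Suc m) \<in> V \<and> idx (v m) < idx (v (Suc m))" if vm: "v m \<in> V" for m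
    proof -
      have "\<forall>i \<ge> 1. \<exists>p. walk_avoiding V E (cop_pos \<sigma> v (i - 1) \<inter> cop_pos \<sigma> v i) p (v (i - 1)) (v i)
                  \<and> enat (length p - 1) \<le> 1" using rp unfolding robber_play_def by (rule conjunct2)
      from spec[OF this, of "Suc m"]
      obtain p where p: "walk_avoiding V E (cop_pos \<sigma> v m \<inter> cop_pos \<sigma> v (Suc m)) p (v m) (v (Suc m))"
          "enat (length p - 1) \<le> 1" by auto
      have cp: "cop_pos \<sigma> v (Suc m) = \<sigma> (map v [0..<Suc m])" by (simp add: cop_pos_def)
      have S: "cop_pos \<sigma> v (Suc m) = (nth xs) ` insert (idx (v m)) {j. j < idx (v m) \<and> E (xs!j) (xs!idx (v m))}"
        using vm unfolding cp \<sigma>_def by simp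
      have vmS: "v m \<in> cop_pos \<sigma> v (Suc m)"
      proof -
        have "xs ! idx (v m) \<in> (nth xs) ` insert (idx (v m)) {j. j < idx (v m) \<and> E (xs!j) (xs!idx (v m))}"
          by (rule imageI, rule insertI1)
        then show ?thesis using S idx[OF vm] by simp
      qed
      have notin: "v (Suc m) \<notin> cop_pos \<sigma> v (Suc m)" using nc by auto
      have len: "length p \<le> 2" using p(2) by (simp add: one_enat_def)
      have pne: "p \<noteq> []" "hd p = v m" "last p = v (Suc m)" "set p \<subseteq> V"
        using p(1) by (auto simp: walk_avoiding_def)
      have "0 < length p" using pne(1) by simp
      then have "length p = 1 \<or> length p = 2" using len by linarith
      then show ?thesis
      proof
        assume "length p = 1"
        then have "v (Suc m) = v m" using pne by (cases p) auto
        then have "v (Suc m) \<in> cop_pos \<sigma> v (Suc m)" using vmS by simp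
        then show ?thesis using notin by blast
      next
        assume l2: "length p = 2"
        then obtain a b where pab: "p = [a,b]" by (auto simp: length_Suc_conv numeral_2_eq_2)
        then have ab: "a = v m" "b = v (Suc m)" using pne by auto
        have E1: "E (v m) (v (Suc m))" using p(1) pab ab unfolding walk_avoiding_def by force
        have vS: "v (Suc m) \<in> V" using pne pab ab by auto
        let ?a = "idx (v m)" and ?b = "idx (v (Suc m))"
        have ia: "?a < length xs" "xs!?a = v m" using idx[OF vm] by auto
        have ib: "?b < length xs" "xs!?b = v (Suc m)" using idx[OF vS] by auto
        have "\<not> ?b \<le> ?a"
        proof
          assume "?b \<le> ?a"
          then have "?b = ?a \<or> ?b < ?a" by linarith
          then have "v (Suc m) \<in> cop_pos \<sigma> v (Suc m)"
          proof
            assume ba: "?b = ?a"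
            have "v (Suc m) = v m" using ia(2) ib(2) ba by metis
            then show ?thesis using vmS by simp
          next
            assume lt: "?b < ?a"
            have "E (v (Suc m)) (v m)" using E1 symE by blast
            then have "E (xs!?b) (xs!?a)" using ia ib by simp
            then have "?b \<in> {j. j < ?a \<and> E (xs!j) (xs!?a)}" using lt by simp
            then have "xs ! ?b \<in> (nth xs) ` insert ?a {j. j < ?a \<and> E (xs!j) (xs!?a)}"
              by (rule imageI[OF insertI2])
            then show ?thesis using S ib by simp
          qed
          then show False using notin by blast
        qed
        then show ?thesis using vS by simp
      qed
    qed
    have "v m \<in> V \<and> m \<le> idx (v m)" for m
    proof (induction m)
      case 0 then show ?case using rp unfolding robber_play_def by simp
    next
      case (Suc m) then show ?case using step[of m] by auto
    qed
    then have "length xs \<le> idx (v (length xs))" and "v (length xs) \<in> V" by auto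
    then show False using idx by (meson leD)
  qed
  show ?thesis unfolding cops_win_def using strat win by blast
qed

lemma robber_wins:
  assumes sg: "simple_graph V E" and fin: "finite V" and HV: "H \<subseteq> V" and Hne: "H \<noteq> {}"
    and deg: "\<forall>u\<in>H. d \<le> card {w\<in>H. E u w}" and kd: "k \<le> d"
  shows "\<not> cops_win V E 1 k"
proof
  assume "cops_win V E 1 k"
  then obtain \<sigma> where st: "cop_strategy V k \<sigma>"
    and w: "\<forall>v. robber_play V E 1 \<sigma> v \<longrightarrow> (\<exists>i\<ge>1. v i \<in> cop_pos \<sigma> v i)"
    unfolding cops_win_def by blast
  obtain a where a: "a \<in> H" using Hne by blast
  define f where "f h = (if last h \<notin> \<sigma> h then last h else (SOME w. w \<in> H \<and> E (last h) w \<and> w \<notin> \<sigma> h))" for h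
  have fprop: "f h \<in> H \<and> f h \<notin> \<sigma> h \<and> (f h = last h \<or> E (last h) (f h))" if lh: "last h \<in> H" for h
  proof (cases "last h \<in> \<sigma> h")
    case False then show ?thesis using that unfolding f_def by simp
  next
    case True
    have ex: "\<exists>w. w \<in> H \<and> E (last h) w \<and> w \<notin> \<sigma> h"
    proof (rule ccontr)
      assume "\<not> ?thesis"
      then have "insert (last h) {w\<in>H. E (last h) w} \<subseteq> \<sigma> h" using True by auto
      moreover have "finite (\<sigma> h)" using st fin unfolding cop_strategy_def by (meson finite_subset)
      ultimately have c1: "card (insert (last h) {w\<in>H. E (last h) w}) \<le> card (\<sigma> h)"
        by (simp add: card_mono)
      have "last h \<notin> {w\<in>H. E (last h) w}" using sg unfolding simple_graph_def by auto
      moreover have "finite {w\<in>H. E (last h) w}" using fin HV by (rule_tac finite_subset[of _ V]) auto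
      ultimately have "card {w\<in>H. E (last h) w} + 1 \<le> card (\<sigma> h)" using c1 by simp
      moreover have "card (\<sigma> h) \<le> k" using st unfolding cop_strategy_def by blast
      moreover have "d \<le> card {w\<in>H. E (last h) w}" using deg lh by blast
      ultimately show False using kd by linarith
    qed
    have "f h = (SOME w. w \<in> H \<and> E (last h) w \<and> w \<notin> \<sigma> h)" using True unfolding f_def by simp
    then show ?thesis using someI_ex[OF ex] by simp
  qed
  define hs where "hs = rec_nat [a] (\<lambda>i l. l @ [f l])"
  have hs0: "hs 0 = [a]" and hsS: "hs (Suc i) = hs i @ [f (hs i)]" for i by (simp_all add: hs_def)
  define v where "v i = last (hs i)" for i
  have hsv: "hs i = map v [0..<Suc i]" for i
  proof (induction i)
    case 0 then show ?case by (simp add: hs0 v_def)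
  next
    case (Suc i)
    have "v (Suc i) = f (hs i)" by (simp add: v_def hsS)
    then show ?case using Suc by (simp add: hsS)
  qed
  have vS: "v (Suc i) = f (map v [0..<Suc i])" for i
  proof -
    have "v (Suc i) = f (hs i)" by (simp add: v_def hsS)
    then show ?thesis by (simp only: hsv)
  qed
  have inH: "v i \<in> H" for i
  proof (induction i)
    case 0 then show ?case by (simp add: v_def hs0 a)
  next
    case (Suc i) then show ?case using fprop[of "map v [0..<Suc i]"] vS[of i] by simp
  qed
  have cp: "cop_pos \<sigma> v (Suc i) = \<sigma> (map v [0..<Suc i])" for i by (simp add: cop_pos_def)
  have notc: "v (Suc i) \<notin> cop_pos \<sigma> v (Suc i)" for i
    using fprop[of "map v [0..<Suc i]"] inH[of i] vS[of i] cp[of i] by simp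
  have rp: "robber_play V E 1 \<sigma> v"
    unfolding robber_play_def
  proof (intro conjI allI impI)
    show "v 0 \<in> V" using inH HV by blast
    fix i :: nat assume "1 \<le> i"
    then obtain m where i: "i = Suc m" by (cases i) auto
    have vmX: "v m \<notin> cop_pos \<sigma> v m" using notc by (cases m) (auto simp: cop_pos_def)
    have fp: "v (Suc m) \<notin> \<sigma> (map v [0..<Suc m]) \<and> (v (Suc m) = v m \<or> E (v m) (v (Suc m)))"
      using fprop[of "map v [0..<Suc m]"] inH[of m] vS[of m] by simp
    show "\<exists>p. walk_avoiding V E (cop_pos \<sigma> v (i - 1) \<inter> cop_pos \<sigma> v i) p (v (i - 1)) (v i)
                  \<and> enat (length p - 1) \<le> 1"
    proof (cases "v (Suc m) = v m")
      case True
      show ?thesis apply (rule exI[of _ "[v m]"])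
        using True fp inH[of m] HV i by (auto simp: walk_avoiding_def cp one_enat_def)
    next
      case False
      have "v m \<in> V" "v (Suc m) \<in> V" using inH HV by auto
      then show ?thesis apply (rule_tac exI[of _ "[v m, v (Suc m)]"])
        using False fp vmX i by (auto simp: walk_avoiding_def cp less_Suc_eq nth_Cons' one_enat_def)
    qed
  qed
  then obtain i where "i \<ge> 1" "v i \<in> cop_pos \<sigma> v i" using w by blast
  then show False using notc by (cases i) auto
qed

theorem mainTheorem1:
  fixes V :: "'a set" and E :: "'a \<Rightarrow> 'a \<Rightarrow> bool"
  assumes "simple_graph V E" and "finite V"
  shows "copw V E 1 = degeneracy V E + 1"
  unfolding copw_def
proof (rule Least_equality)
  show "1 \<le> degeneracy V E + 1 \<and> cops_win V E 1 (degeneracy V E + 1)"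
    using cops_upper[OF assms] by simp
next
  fix k assume k: "1 \<le> k \<and> cops_win V E 1 k"
  show "degeneracy V E + 1 \<le> k"
  proof (rule ccontr)
    assume "\<not> ?thesis"
    then have kd: "k \<le> degeneracy V E" by simp
    then have "1 \<le> degeneracy V E" using k by simp
    then obtain H where "H \<subseteq> V" "H \<noteq> {}" "\<forall>u\<in>H. degeneracy V E \<le> card {w\<in>H. E u w}"
      using core_exists[OF assms] by blast
    then have "\<not> cops_win V E 1 k" using robber_wins[OF assms] kd by blast
    then show False using k by blast
  qed
qed

end
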